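(* Let $G=(V,E)$ be a graph with vertex weights $w: V \to \mathbb{Z}^+$. There exists a set $S \subseteq V$ attaining the minimum in $\mathrm{wvi}(G) = \min_{S \subseteq V} \{ w(S) + \max_{D} w(D) \}$ (maximum over connected components $D$ of $G-S$) such that for every connected component $D$ of $G - S$ and every module $M$ of $G$, one of the following holds: (i) $M \cap D = \emptyset$, (ii) $M \subseteq D$, or (iii) $D \subseteq M$.
   Context: Graphs are finite, simple and undirected; for $X \subseteq V$, $w(X) = \sum_{x \in X} w(x)$, and connected components are identified with their vertex sets. A module of $G$ is a set $M \subseteq V$ such that every vertex $x \in V \setminus M$ is adjacent either to all vertices of $M$ or to none of them. *)

theory Defs
  imports Main
begin

definition simple_graph :: "'a set \<Rightarrow> ('a \<Rightarrow> 'a \<Rightarrow> bool) \<Rightarrow> bool" where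
  "simple_graph V E \<longleftrightarrow> finite V \<and> (\<forall>x y. E x y \<longrightarrow> E y x)
     \<and> (\<forall>x. \<not> E x x) \<and> (\<forall>x y. E x y \<longrightarrow> x \<in> V \<and> y \<in> V)"

definition components :: "('a \<Rightarrow> 'a \<Rightarrow> bool) \<Rightarrow> 'a set \<Rightarrow> 'a set set" where
  "components E U = {C. \<exists>x\<in>U. C = {y. (\<lambda>a b. E a b \<and> a \<in> U \<and> b \<in> U)\<^sup>*\<^sup>* x y}}"

definition is_module :: "'a set \<Rightarrow> ('a \<Rightarrow> 'a \<Rightarrow> bool) \<Rightarrow> 'a set \<Rightarrow> bool" where
  "is_module V E M \<longleftrightarrow> M \<subseteq> V \<and>
     (\<forall>x\<in>V - M. (\<forall>y\<in>M. E x y) \<or> (\<forall>y\<in>M. \<not> E x y))"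

text \<open>w(S) + max_D w(D) over components D of G - S (the max over no components is 0).\<close>
definition wvi_cost :: "'a set \<Rightarrow> ('a \<Rightarrow> 'a \<Rightarrow> bool) \<Rightarrow> ('a \<Rightarrow> nat) \<Rightarrow> 'a set \<Rightarrow> nat" where
  "wvi_cost V E w S = sum w S + Max (insert 0 ((\<lambda>D. sum w D) ` components E (V - S)))"

definition wvi :: "'a set \<Rightarrow> ('a \<Rightarrow> 'a \<Rightarrow> bool) \<Rightarrow> ('a \<Rightarrow> nat) \<Rightarrow> nat" where
  "wvi V E w = Min (wvi_cost V E w ` Pow V)"

end

theory Submission
  imports Defs
begin

abbreviation rl :: "('a \<Rightarrow> 'a \<Rightarrow> bool) \<Rightarrow> 'a set \<Rightarrow> 'a \<Rightarrow> 'a \<Rightarrow> bool" where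
  "rl E U \<equiv> (\<lambda>a b. E a b \<and> a \<in> U \<and> b \<in> U)"

lemma rt_sym:
  assumes sym: "\<forall>x y. E x y \<longrightarrow> E y x" and h: "(rl E U)\<^sup>*\<^sup>* x y"
  shows "(rl E U)\<^sup>*\<^sup>* y x"
  using h
proof (induction rule: rtranclp_induct)
  case base
  then show ?case by simp
next
  case (step y z)
  then have "rl E U z y" using sym by blast
  then show ?case using step(3) by (rule converse_rtranclp_into_rtranclp)
qed

lemma rt_in: "(rl E U)\<^sup>*\<^sup>* x y \<Longrightarrow> x \<in> U \<Longrightarrow> y \<in> U"
  by (induction rule: rtranclp_induct) auto

lemma crossing: "R\<^sup>*\<^sup>* x y \<Longrightarrow> P x \<Longrightarrow> \<not> P y \<Longrightarrow> \<exists>u v. R\<^sup>*\<^sup>* x u \<and> R u v \<and> P u \<and> \<not> P v"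
proof (induction rule: rtranclp_induct)
  case base
  then show ?case by simp
next
  case (step y z)
  show ?case
  proof (cases "P y")
    case True
    then show ?thesis using step by blast
  next
    case False
    then show ?thesis using step by blast
  qed
qed

lemma key:
  assumes g: "simple_graph V E" and SV: "S \<subseteq> V"
    and Dc: "D \<in> components E (V - S)" and mod: "is_module V E M"
    and h1: "M \<inter> D \<noteq> {}" and h2: "\<not> M \<subseteq> D" and h3: "\<not> D \<subseteq> M"
  shows "M - D \<subseteq> S" "M - D \<noteq> {}" "wvi_cost V E w (S - (M - D)) \<le> wvi_cost V E w S"
proof -
  define U where "U = V - S"
  define X where "X = M - D"
  have sym: "\<forall>x y. E x y \<longrightarrow> E y x" and fin: "finite V"
    and ev: "\<forall>x y. E x y \<longrightarrow> x \<in> V \<and> y \<in> V"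
    using g unfolding simple_graph_def by auto
  have MV: "M \<subseteq> V" using mod unfolding is_module_def by auto
  have modp: "\<And>x y z. x \<in> V - M \<Longrightarrow> y \<in> M \<Longrightarrow> z \<in> M \<Longrightarrow> E x y \<Longrightarrow> E x z"
    using mod unfolding is_module_def by blast
  obtain a0 where a0: "a0 \<in> U" and Ddef: "D = {y. (rl E U)\<^sup>*\<^sup>* a0 y}"
  proof -
    have "\<exists>a0\<in>U. D = {y. (rl E U)\<^sup>*\<^sup>* a0 y}" using Dc unfolding components_def U_def by simp
    then show ?thesis using that by blast
  qed
  have DU: "D \<subseteq> U"
  proof
    fix y assume "y \<in> D"
    then show "y \<in> U" using rt_in[of E U a0 y] a0 Ddef by simp
  qed
  have Dcl: "\<And>y z. y \<in> D \<Longrightarrow> rl E U y z \<Longrightarrow> z \<in> D"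
    unfolding Ddef by (auto intro: rtranclp.rtrancl_into_rtrancl)
  have Dback: "\<And>x y. (rl E U)\<^sup>*\<^sup>* x y \<Longrightarrow> y \<in> D \<Longrightarrow> x \<in> D"
  proof -
    fix x y assume "(rl E U)\<^sup>*\<^sup>* x y" "y \<in> D"
    then have "(rl E U)\<^sup>*\<^sup>* a0 y" "(rl E U)\<^sup>*\<^sup>* y x" using Ddef rt_sym[OF sym] by auto
    then show "x \<in> D" unfolding Ddef by auto
  qed
  have Dfwd: "\<And>x y. (rl E U)\<^sup>*\<^sup>* x y \<Longrightarrow> x \<in> D \<Longrightarrow> y \<in> D"
  proof -
    fix x y assume "(rl E U)\<^sup>*\<^sup>* x y" "x \<in> D"
    then show "y \<in> D" unfolding Ddef by auto
  qed
  obtain m where m: "m \<in> M" "m \<in> D" using h1 by blast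
  obtain d where d: "d \<in> D" "d \<notin> M" using h3 by blast
  have "(rl E U)\<^sup>*\<^sup>* m a0" using m Ddef rt_sym[OF sym] by auto
  moreover have "(rl E U)\<^sup>*\<^sup>* a0 d" using d Ddef by auto
  ultimately have "(rl E U)\<^sup>*\<^sup>* m d" by auto
  then obtain a b where ab: "(rl E U)\<^sup>*\<^sup>* m a" "rl E U a b" "a \<in> M" "b \<notin> M"
    using crossing[of "rl E U" m d "\<lambda>u. u \<in> M"] m d by blast
  have aD: "a \<in> D" using Dfwd ab(1) m(2) by blast
  have bD: "b \<in> D" using Dcl aD ab(2) by blast
  have bV: "b \<in> V" using ab(2) ev by blast
  have badj: "\<And>z. z \<in> M \<Longrightarrow> E b z"
    using modp[of b a] ab bV sym by blast
  show XS: "M - D \<subseteq> S"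
  proof
    fix z assume z: "z \<in> M - D"
    show "z \<in> S"
    proof (rule ccontr)
      assume "z \<notin> S"
      then have "z \<in> U" using z MV U_def by auto
      then have "rl E U b z" using badj z bD DU by auto
      then show False using Dcl bD z by blast
    qed
  qed
  show "M - D \<noteq> {}" using h2 by blast
  have MU: "M \<inter> U \<subseteq> D" using XS U_def by blast
  have XV: "X \<subseteq> V" using X_def MV by auto
  have U'eq: "V - (S - X) = U \<union> X" using XV U_def by auto
  define T where "T x = (if x \<in> X \<union> D then X \<union> D else {y. (rl E U)\<^sup>*\<^sup>* x y})" for x
  have reach: "\<And>x y. (rl E (U \<union> X))\<^sup>*\<^sup>* x y \<Longrightarrow> x \<in> U \<union> X \<Longrightarrow> y \<in> T x"
  proof -
    fix x y assume r: "(rl E (U \<union> X))\<^sup>*\<^sup>* x y" and x: "x \<in> U \<union> X"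
    from r show "y \<in> T x"
    proof (induction rule: rtranclp_induct)
      case base
      then show ?case unfolding T_def by auto
    next
      case (step y z)
      have yz: "E y z" "y \<in> U \<union> X" "z \<in> U \<union> X" using step(2) by auto
      show ?case
      proof (cases "x \<in> X \<union> D")
        case True
        then have yT: "y \<in> X \<union> D" using step(3) unfolding T_def by auto
        have "z \<in> X \<union> D"
        proof (cases "z \<in> X")
          case True then show ?thesis by auto
        next
          case zX: False
          then have zU: "z \<in> U" using yz by auto
          show ?thesis
          proof (cases "y \<in> D")
            case True
            then show ?thesis using Dcl[of y z] yz zU DU by auto
          next
            case False
            then have yX: "y \<in> X" using yT by auto
            show ?thesis
            proof (cases "z \<in> M")
              case True then show ?thesis using MU zU by auto
            next
              case False
              then have "z \<in> V - M" using zU U_def by auto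
              then have "E z a" using modp[of z y a] yX X_def yz sym ab(3) by blast
              then have "rl E U a z" using sym aD DU zU by blast
              then show ?thesis using Dcl aD by blast
            qed
          qed
        qed
        then show ?thesis using True unfolding T_def by auto
      next
        case False
        then have yr: "(rl E U)\<^sup>*\<^sup>* x y" using step(3) unfolding T_def by auto
        have xU: "x \<in> U" using False x by auto
        have yU: "y \<in> U" using rt_in[OF yr xU] .
        have yD: "y \<notin> D" using Dback[OF yr] False by auto
        have "z \<in> {y. (rl E U)\<^sup>*\<^sup>* x y}"
        proof (cases "z \<in> U")
          case True
          then have "rl E U y z" using yz yU by auto
          then have "(rl E U)\<^sup>*\<^sup>* x z" by (rule rtranclp.rtrancl_into_rtrancl[OF yr])
          then show ?thesis by simp
        next
          case False
          then have zX: "z \<in> X" using yz by auto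
          have yM: "y \<notin> M" using MU yU yD by auto
          have "y \<in> V - M" using yM yU U_def by auto
          then have "E y a" using modp[of y z a] zX X_def yz ab(3) by blast
          then have "rl E U a y" using sym aD DU yU by blast
          then have "y \<in> D" using Dcl aD by blast
          then show ?thesis using yD by auto
        qed
        then show ?thesis using False unfolding T_def by auto
      qed
    qed
  qed
  define MX where "MX = Max (insert 0 ((\<lambda>D. sum w D) ` components E U))"
  have compsub: "\<And>W C. W \<subseteq> V \<Longrightarrow> C \<in> components E W \<Longrightarrow> C \<subseteq> V"
  proof -
    fix W C assume WV: "W \<subseteq> V" and "C \<in> components E W"
    then obtain x where x: "x \<in> W" and Cd: "C = {y. (rl E W)\<^sup>*\<^sup>* x y}"
      unfolding components_def by blast
    show "C \<subseteq> V"
    proof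
      fix y assume "y \<in> C"
      then have "(rl E W)\<^sup>*\<^sup>* x y" using Cd by simp
      then have "y \<in> W" using x by (rule rt_in)
      then show "y \<in> V" using WV by blast
    qed
  qed
  have finC: "finite (components E U)"
  proof -
    have WV: "U \<subseteq> V" using U_def by blast
    have "components E (U) \<subseteq> Pow V"
    proof
      fix C assume "C \<in> components E (U)"
      then show "C \<in> Pow V" using compsub[OF WV, of C] by simp
    qed
    then show ?thesis by (rule finite_subset) (simp add: fin)
  qed
  have geMX: "\<And>C. C \<in> components E U \<Longrightarrow> sum w C \<le> MX"
    unfolding MX_def by (rule Max_ge) (simp_all add: finC)
  have DX: "sum w (X \<union> D) = sum w X + sum w D"
  proof (rule sum.union_disjoint)
    show "finite X" using finite_subset[OF XV fin] .
    have "D \<subseteq> V" using DU U_def by blast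
    then show "finite D" using finite_subset fin by blast
    show "X \<inter> D = {}" unfolding X_def by blast
  qed
  have bound: "\<And>C. C \<in> components E (U \<union> X) \<Longrightarrow> sum w C \<le> MX + sum w X"
  proof -
    fix C assume C: "C \<in> components E (U \<union> X)"
    then obtain x where x: "x \<in> U \<union> X" and Cd: "C = {y. (rl E (U \<union> X))\<^sup>*\<^sup>* x y}"
      unfolding components_def by blast
    have CT: "C \<subseteq> T x" using reach x Cd by auto
    have finT: "finite (T x)"
    proof -
      have "T x \<subseteq> V"
      proof (cases "x \<in> X \<union> D")
        case True then show ?thesis unfolding T_def using XV DU U_def by auto
      next
        case False
        then have xU: "x \<in> U" using x by auto
        show ?thesis
        proof
          fix y assume "y \<in> T x"
          then have "(rl E U)\<^sup>*\<^sup>* x y" using False T_def by simp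
          then have "y \<in> U" using xU by (rule rt_in)
          then show "y \<in> V" using U_def by simp
        qed
      qed
      then show ?thesis using fin finite_subset by blast
    qed
    have "sum w C \<le> sum w (T x)" by (rule sum_mono2[OF finT CT]) simp
    also have "\<dots> \<le> MX + sum w X"
    proof (cases "x \<in> X \<union> D")
      case True
      then have "sum w (T x) = sum w X + sum w D" unfolding T_def using DX by simp
      moreover have "sum w D \<le> MX" using geMX Dc U_def by blast
      ultimately show ?thesis by simp
    next
      case False
      then have "x \<in> U" using x by auto
      then have "T x \<in> components E U" unfolding T_def components_def using False by auto
      then show ?thesis using geMX by fastforce
    qed
    finally show "sum w C \<le> MX + sum w X" .
  qed
  have finC': "finite (components E (U \<union> X))"
  proof -
    have WV: "U \<union> X \<subseteq> V" using U_def XV by blast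
    have "components E (U \<union> X) \<subseteq> Pow V"
    proof
      fix C assume "C \<in> components E (U \<union> X)"
      then show "C \<in> Pow V" using compsub[OF WV, of C] by simp
    qed
    then show ?thesis by (rule finite_subset) (simp add: fin)
  qed
  have M2: "Max (insert 0 ((\<lambda>D. sum w D) ` components E (U \<union> X))) \<le> MX + sum w X"
    using finC' bound by (subst Max_le_iff) auto
  have finS: "finite S" using SV fin finite_subset by blast
  have SS: "sum w S = sum w (S - X) + sum w X"
    using sum.subset_diff[OF _ finS, of X w] XS X_def by simp
  show "wvi_cost V E w (S - (M - D)) \<le> wvi_cost V E w S"
    unfolding wvi_cost_def X_def[symmetric] U'eq U_def[symmetric] MX_def[symmetric]
    using M2 SS by simp
qed

theorem lemma11:
  fixes V :: "'a set" and E :: "'a \<Rightarrow> 'a \<Rightarrow> bool" and w :: "'a \<Rightarrow> nat"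
  assumes "simple_graph V E"
    and "\<forall>v\<in>V. w v > 0"
  shows "\<exists>S. S \<subseteq> V \<and> wvi_cost V E w S = wvi V E w \<and>
           (\<forall>D\<in>components E (V - S). \<forall>M. is_module V E M \<longrightarrow>
              M \<inter> D = {} \<or> M \<subseteq> D \<or> D \<subseteq> M)"
proof -
  have fin: "finite V" using assms(1) unfolding simple_graph_def by auto
  have "wvi V E w \<in> wvi_cost V E w ` Pow V"
    unfolding wvi_def using fin by (intro Min_in) auto
  then obtain S0 where "S0 \<subseteq> V" "wvi_cost V E w S0 = wvi V E w" by auto
  then obtain S where S: "S \<subseteq> V \<and> wvi_cost V E w S = wvi V E w"
    and Smin: "\<And>T. T \<subseteq> V \<and> wvi_cost V E w T = wvi V E w \<Longrightarrow> card S \<le> card T"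
    using ex_has_least_nat[of "\<lambda>S. S \<subseteq> V \<and> wvi_cost V E w S = wvi V E w" S0 card] by blast
  have lb: "\<And>T. T \<subseteq> V \<Longrightarrow> wvi V E w \<le> wvi_cost V E w T"
    unfolding wvi_def using fin by (intro Min_le) auto
  show ?thesis
  proof (rule exI[of _ S], intro conjI ballI allI impI)
    show "S \<subseteq> V" "wvi_cost V E w S = wvi V E w" using S by auto
  next
    fix D M assume D: "D \<in> components E (V - S)" and M: "is_module V E M"
    show "M \<inter> D = {} \<or> M \<subseteq> D \<or> D \<subseteq> M"
    proof (rule ccontr)
      assume "\<not> ?thesis"
      then have h: "M \<inter> D \<noteq> {}" "\<not> M \<subseteq> D" "\<not> D \<subseteq> M" by auto
      note k = key[OF assms(1) _ D M h(1) h(2) h(3)]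
      have SV: "S \<subseteq> V" using S by auto
      have T: "S - (M - D) \<subseteq> V" using SV by auto
      have "wvi_cost V E w (S - (M - D)) = wvi V E w"
        using k(3)[OF SV, of w] lb[OF T] S by linarith
      then have "card S \<le> card (S - (M - D))" using Smin[OF conjI[OF T]] by simp
      moreover have "S - (M - D) \<subset> S" using k(1)[OF SV] k(2)[OF SV] by blast
      moreover have "finite S" using SV fin finite_subset by blast
      ultimately show False using psubset_card_mono[of S "S - (M - D)"] by linarith
    qed
  qed
qed

end
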